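(* There is an absolute constant $c>0$ such that the following holds. Let $n\ge 2$, let $d\geq(\log n)^4$, and let $G$ be a graph on $n$ vertices with average degree $d$. Then $G$ has an induced subgraph with average degree at least $\frac{c\log d}{\log n}\cdot d$ and maximum degree at most $2d^{3/2}$.
   Context: Logarithms are natural. *)

theory Defs
  imports Complex_Main
begin

definition simple_graph :: "'a set \<Rightarrow> 'a set set \<Rightarrow> bool" where
  "simple_graph V E \<longleftrightarrow> finite V \<and> (\<forall>e\<in>E. e \<subseteq> V \<and> card e = 2)"

definition induced_edges :: "'a set set \<Rightarrow> 'a set \<Rightarrow> 'a set set" where
  "induced_edges E U = {e \<in> E. e \<subseteq> U}"

definition degree_in :: "'a set \<Rightarrow> 'a set set \<Rightarrow> 'a \<Rightarrow> nat" where
  "degree_in U E v = card {u \<in> U. {u, v} \<in> E}"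

definition avg_degree :: "'a set \<Rightarrow> 'a set set \<Rightarrow> real" where
  "avg_degree V E = 2 * real (card E) / real (card V)"

definition max_degree :: "'a set \<Rightarrow> 'a set set \<Rightarrow> nat" where
  "max_degree V E = Max (insert 0 (degree_in V E ` V))"

end

theory Submission
  imports Defs
begin
lemma card_filter_sum:
  assumes "finite B"
  shows "card {x\<in>B. P x} = (\<Sum>x\<in>B. if P x then 1 else (0::nat))"
  using assms by (simp add: sum.inter_filter[symmetric])

lemma cross_sym:
  assumes "finite A" "finite B"
  shows "(\<Sum>a\<in>A. degree_in B E a) = (\<Sum>b\<in>B. degree_in A E b)"
proof -
  have "(\<Sum>a\<in>A. degree_in B E a) = (\<Sum>a\<in>A. \<Sum>b\<in>B. if {b,a} \<in> E then 1 else (0::nat))"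
    unfolding degree_in_def using assms by (simp add: card_filter_sum)
  also have "\<dots> = (\<Sum>b\<in>B. \<Sum>a\<in>A. if {b,a} \<in> E then 1 else (0::nat))"
    by (rule sum.swap)
  also have "\<dots> = (\<Sum>b\<in>B. degree_in A E b)"
    unfolding degree_in_def using assms by (simp add: card_filter_sum insert_commute)
  finally show ?thesis .
qed

lemma deg_mono:
  assumes "finite Y" "X \<subseteq> Y"
  shows "degree_in X E v \<le> degree_in Y E v"
  unfolding degree_in_def using assms by (intro card_mono) auto

lemma deg_split:
  assumes "finite X"
  shows "degree_in X E v = degree_in (X \<inter> A) E v + degree_in (X - A) E v"
proof -
  have "{u \<in> X. {u, v} \<in> E} = {u \<in> X \<inter> A. {u, v} \<in> E} \<union> {u \<in> X - A. {u, v} \<in> E}" by auto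
  moreover have "card ({u \<in> X \<inter> A. {u, v} \<in> E} \<union> {u \<in> X - A. {u, v} \<in> E}) =
     card {u \<in> X \<inter> A. {u, v} \<in> E} + card {u \<in> X - A. {u, v} \<in> E}"
    using assms by (intro card_Un_disjoint) auto
  ultimately show ?thesis unfolding degree_in_def by simp
qed

lemma deg_le_card:
  assumes "finite X" "\<forall>e\<in>E. card e = 2" "v \<in> X"
  shows "degree_in X E v \<le> card X - 1"
proof -
  have "{u \<in> X. {u, v} \<in> E} \<subseteq> X - {v}"
    using assms(2) by auto
  hence "degree_in X E v \<le> card (X - {v})" unfolding degree_in_def
    using assms(1) by (intro card_mono) auto
  also have "\<dots> \<le> card X - 1" using assms(3) by (simp add: card_Diff_singleton_if)
  finally show ?thesis .
qed

lemma edges_at: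
  assumes "finite X" "\<forall>e\<in>E. card e = 2" "v \<in> X"
  shows "card {e \<in> induced_edges E X. v \<in> e} = degree_in X E v"
proof -
  have "bij_betw (\<lambda>u. {u,v}) {u\<in>X. {u,v}\<in>E} {e \<in> induced_edges E X. v \<in> e}"
  proof (rule bij_betwI')
    fix x y assume x: "x \<in> {u\<in>X. {u,v}\<in>E}" and y: "y \<in> {u\<in>X. {u,v}\<in>E}"
    have "x \<noteq> v" proof
      assume "x = v" with x assms(2) show False by force
    qed
    show "({x, v} = {y, v}) = (x = y)"
      using \<open>x \<noteq> v\<close> by (auto simp: doubleton_eq_iff)
  next
    fix x assume "x \<in> {u\<in>X. {u,v}\<in>E}"
    thus "{x, v} \<in> {e \<in> induced_edges E X. v \<in> e}"
      using assms(3) by (auto simp: induced_edges_def)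
  next
    fix e assume e: "e \<in> {e \<in> induced_edges E X. v \<in> e}"
    hence eE: "e \<in> E" "e \<subseteq> X" "v \<in> e" by (auto simp: induced_edges_def)
    then obtain a b where ab: "a \<noteq> b" "e = {a,b}" using assms(2) by (metis card_2_iff)
    show "\<exists>x\<in>{u \<in> X. {u, v} \<in> E}. e = {x, v}"
    proof (cases "v = a")
      case True thus ?thesis using ab eE by (intro bexI[of _ b]) (auto simp: insert_commute)
    next
      case False hence "v = b" using ab eE by auto
      thus ?thesis using ab eE by (intro bexI[of _ a]) auto
    qed
  qed
  thus ?thesis unfolding degree_in_def by (simp add: bij_betw_same_card)
qed

lemma finite_ie: "finite X \<Longrightarrow> finite (induced_edges E X)"
  unfolding induced_edges_def by (rule finite_subset[of _ "Pow X"]) auto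

lemma handshake:
  assumes "finite X" "\<forall>e\<in>E. card e = 2"
  shows "(\<Sum>v\<in>X. degree_in X E v) = 2 * card (induced_edges E X)"
proof -
  have "(\<Sum>v\<in>X. degree_in X E v) = (\<Sum>v\<in>X. card {e \<in> induced_edges E X. v \<in> e})"
    using edges_at[OF assms] by simp
  also have "\<dots> = (\<Sum>v\<in>X. \<Sum>e\<in>induced_edges E X. if v \<in> e then 1 else (0::nat))"
    using finite_ie[OF assms(1)] by (simp add: card_filter_sum)
  also have "\<dots> = (\<Sum>e\<in>induced_edges E X. \<Sum>v\<in>X. if v \<in> e then 1 else (0::nat))"
    by (rule sum.swap)
  also have "\<dots> = (\<Sum>e\<in>induced_edges E X. card {v\<in>X. v \<in> e})"
    using assms(1) by (simp add: card_filter_sum)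
  also have "\<dots> = (\<Sum>e\<in>induced_edges E X. 2)"
  proof (rule sum.cong)
    fix e assume "e \<in> induced_edges E X"
    hence "{v\<in>X. v \<in> e} = e" "card e = 2" using assms(2) by (auto simp: induced_edges_def)
    thus "card {v\<in>X. v \<in> e} = 2" by simp
  qed simp
  finally show ?thesis by simp
qed

lemma ds_remove:
  assumes "finite X" "\<forall>e\<in>E. card e = 2" "v \<in> X"
  shows "(\<Sum>u\<in>X. degree_in X E u) = (\<Sum>u\<in>X-{v}. degree_in (X-{v}) E u) + 2 * degree_in X E v"
proof -
  have "induced_edges E X = induced_edges E (X - {v}) \<union> {e \<in> induced_edges E X. v \<in> e}"
    by (auto simp: induced_edges_def)
  moreover have "card (induced_edges E (X - {v}) \<union> {e \<in> induced_edges E X. v \<in> e})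
     = card (induced_edges E (X - {v})) + card {e \<in> induced_edges E X. v \<in> e}"
    using finite_ie[OF assms(1)] finite_ie[of "X-{v}" E] assms(1)
    by (intro card_Un_disjoint) (auto simp: induced_edges_def)
  ultimately show ?thesis
    using handshake[OF assms(1,2)] handshake[of "X-{v}" E] assms edges_at[OF assms] by simp
qed

lemma round01:
  fixes F :: "(nat \<Rightarrow> real) \<Rightarrow> real"
  assumes aff: "\<And>p y t. F (p(y:=t)) = (1-t) * F (p(y:=0)) + t * F (p(y:=1))"
  and fin: "finite Y"
  shows "(\<forall>y\<in>Y. 0 \<le> p y \<and> p y \<le> 1) \<Longrightarrow>
     \<exists>q. (\<forall>y\<in>Y. q y = 0 \<or> q y = 1) \<and> (\<forall>y. y \<notin> Y \<longrightarrow> q y = p y) \<and> F p \<le> F q"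
  using fin
proof (induction Y arbitrary: p rule: finite_induct)
  case empty
  then show ?case by (intro exI[of _ p]) auto
next
  case (insert y Y)
  define t where "t = p y"
  have t01: "0 \<le> t" "t \<le> 1" using insert.prems t_def by auto
  have pe: "p = p(y := t)" using t_def by simp
  have "F p = (1-t) * F (p(y:=0)) + t * F (p(y:=1))"
    using aff[of p y t] pe by simp
  hence "F p \<le> max (F (p(y:=0))) (F (p(y:=1)))"
  proof -
    assume h: "F p = (1-t) * F (p(y:=0)) + t * F (p(y:=1))"
    have "(1-t) * F (p(y:=0)) \<le> (1-t) * max (F (p(y:=0))) (F (p(y:=1)))"
      using t01 by (intro mult_left_mono) auto
    moreover have "t * F (p(y:=1)) \<le> t * max (F (p(y:=0))) (F (p(y:=1)))"
      using t01 by (intro mult_left_mono) auto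
    ultimately show ?thesis using h by (simp add: algebra_simps)
  qed
  then obtain b where b: "b = 0 \<or> b = 1" "F p \<le> F (p(y:=b))"
    by (metis max_def)
  have "\<forall>z\<in>Y. 0 \<le> (p(y:=b)) z \<and> (p(y:=b)) z \<le> 1"
    using insert.prems insert.hyps by auto
  from insert.IH[OF this] obtain q where
    q: "\<forall>z\<in>Y. q z = 0 \<or> q z = 1" "\<forall>z. z \<notin> Y \<longrightarrow> q z = (p(y:=b)) z" "F (p(y:=b)) \<le> F q"
    by blast
  show ?case
  proof (intro exI[of _ q] conjI)
    show "\<forall>z\<in>insert y Y. q z = 0 \<or> q z = 1" using q(1) q(2) insert.hyps b(1) by auto
    show "\<forall>z. z \<notin> insert y Y \<longrightarrow> q z = p z" using q(2) by auto
    show "F p \<le> F q" using b(2) q(3) by simp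
  qed
qed

lemma sum_upd:
  fixes p :: "nat \<Rightarrow> real" and g :: "real \<Rightarrow> real"
  assumes "finite N" "g 0 = 0"
  shows "(\<Sum>v\<in>N. g ((p(y:=t)) v)) = (\<Sum>v\<in>N. g ((p(y:=0)) v)) + (if y \<in> N then g t else 0)"
proof (cases "y \<in> N")
  case True
  have "(\<Sum>v\<in>N. g ((p(y:=t)) v)) = g t + (\<Sum>v\<in>N-{y}. g ((p(y:=t)) v))"
    using True assms(1) by (simp add: sum.remove)
  moreover have "(\<Sum>v\<in>N. g ((p(y:=0)) v)) = g 0 + (\<Sum>v\<in>N-{y}. g ((p(y:=0)) v))"
    using True assms(1) by (simp add: sum.remove)
  moreover have "(\<Sum>v\<in>N-{y}. g ((p(y:=t)) v)) = (\<Sum>v\<in>N-{y}. g ((p(y:=0)) v))"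
    by (rule sum.cong) auto
  ultimately show ?thesis using True assms(2) by simp
next
  case False
  have "(\<Sum>v\<in>N. g ((p(y:=t)) v)) = (\<Sum>v\<in>N. g ((p(y:=0)) v))"
    using False by (intro sum.cong) auto
  thus ?thesis using False by simp
qed

definition Fpot :: "nat set \<Rightarrow> nat set \<Rightarrow> (nat \<Rightarrow> nat set) \<Rightarrow> real \<Rightarrow> real \<Rightarrow> (nat \<Rightarrow> real) \<Rightarrow> real" where
  "Fpot A L N D lam p = (\<Sum>a\<in>A. (\<Sum>v\<in>N a. p v) - ((\<Sum>v\<in>N a. p v)^2 - (\<Sum>v\<in>N a. (p v)^2)) / D)
     - lam * (\<Sum>v\<in>L. p v)"

lemma aff_term:
  fixes s0 q0 t D c :: real
  assumes "c = 0 \<or> c = 1"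
  shows "(s0 + c*t) - ((s0 + c*t)^2 - (q0 + c*t^2))/D =
     (1-t) * ((s0) - ((s0)^2 - (q0))/D) + t * ((s0 + c) - ((s0 + c)^2 - (q0 + c))/D)"
proof -
  have "(s0 + c*t)^2 - (q0 + c*t^2) = (1-t) * (s0^2 - q0) + t * ((s0 + c)^2 - (q0 + c))"
    using assms by (auto simp: algebra_simps power2_eq_square)
  hence "((s0 + c*t)^2 - (q0 + c*t^2))/D = (1-t) * ((s0^2 - q0)/D) + t * (((s0 + c)^2 - (q0 + c))/D)"
    by (simp add: add_divide_distrib)
  thus ?thesis by (simp add: algebra_simps)
qed

lemma Fpot_aff:
  assumes "finite A" "finite L" "\<forall>a\<in>A. finite (N a)"
  shows "Fpot A L N D lam (p(y:=t)) = (1-t) * Fpot A L N D lam (p(y:=0)) + t * Fpot A L N D lam (p(y:=1))"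
proof -
  let ?q = "p(y:=0)"
  define c where "c a = (if y \<in> N a then 1 else (0::real))" for a
  define cL where "cL = (if y \<in> L then 1 else (0::real))"
  define S where "S a = (\<Sum>v\<in>N a. ?q v)" for a
  define Q where "Q a = (\<Sum>v\<in>N a. (?q v)^2)" for a
  define SL where "SL = (\<Sum>v\<in>L. ?q v)"
  define phi where "phi a u = (S a + c a * u) - ((S a + c a * u)^2 - (Q a + c a * u^2)) / D" for a u
  have s: "(\<Sum>v\<in>N a. (p(y:=u)) v) = S a + c a * u" if "a \<in> A" for a u
    using sum_upd[of "N a" "\<lambda>x. x" p y u] assms(3) that by (simp add: c_def S_def)
  have sq: "(\<Sum>v\<in>N a. ((p(y:=u)) v)^2) = Q a + c a * u^2" if "a \<in> A" for a u
    using sum_upd[of "N a" "\<lambda>x. x^2" p y u] assms(3) that by (simp add: c_def Q_def)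
  have l: "(\<Sum>v\<in>L. (p(y:=u)) v) = SL + cL * u" for u
    using sum_upd[of L "\<lambda>x. x" p y u] assms(2) by (simp add: cL_def SL_def)
  have c01: "c a = 0 \<or> c a = 1" for a by (simp add: c_def)
  have fu: "Fpot A L N D lam (p(y:=u)) = (\<Sum>a\<in>A. phi a u) - lam * (SL + cL * u)" for u
  proof -
    have "(\<Sum>a\<in>A. (\<Sum>v\<in>N a. (p(y:=u)) v) - ((\<Sum>v\<in>N a. (p(y:=u)) v)^2 - (\<Sum>v\<in>N a. ((p(y:=u)) v)^2)) / D)
       = (\<Sum>a\<in>A. phi a u)"
      by (rule sum.cong[OF refl]) (simp only: s sq phi_def)
    thus ?thesis unfolding Fpot_def l by simp
  qed
  have ph: "phi a t = (1-t) * phi a 0 + t * phi a 1" for a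
    unfolding phi_def using aff_term[OF c01[of a], of "S a" t "Q a" D] by simp
  have "(\<Sum>a\<in>A. phi a t) = (1-t) * (\<Sum>a\<in>A. phi a 0) + t * (\<Sum>a\<in>A. phi a 1)"
    unfolding ph by (simp add: sum.distrib sum_distrib_left)
  thus ?thesis unfolding fu by (simp add: algebra_simps)
qed

lemma sum_indicator_real:
  assumes "finite B"
  shows "(\<Sum>x\<in>B. if x \<in> S then 1 else (0::real)) = real (card (B \<inter> S))"
  using assms by (simp add: sum.If_cases Int_def)

lemma round_exists:
  assumes fA: "finite A" and fL: "finite L" and NL: "\<forall>a\<in>A. N a \<subseteq> L"
    and b: "0 \<le> \<beta>" "\<beta> \<le> 1"
  shows "\<exists>S\<subseteq>L. Fpot A L N D lam (\<lambda>v. if v \<in> L then \<beta> else 0) \<le>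
     (\<Sum>a\<in>A. real (card (N a \<inter> S)) - ((real (card (N a \<inter> S)))^2 - real (card (N a \<inter> S))) / D)
       - lam * real (card S)"
proof -
  define p0 where "p0 = (\<lambda>v. if v \<in> L then \<beta> else (0::real))"
  have fN: "\<forall>a\<in>A. finite (N a)" using NL fL finite_subset by blast
  have "\<exists>q. (\<forall>y\<in>L. q y = 0 \<or> q y = 1) \<and> (\<forall>y. y \<notin> L \<longrightarrow> q y = p0 y) \<and>
      Fpot A L N D lam p0 \<le> Fpot A L N D lam q"
    by (rule round01[OF Fpot_aff[OF fA fL fN] fL]) (use b in \<open>auto simp: p0_def\<close>)
  then obtain q where q: "\<forall>y\<in>L. q y = 0 \<or> q y = 1" "\<forall>y. y \<notin> L \<longrightarrow> q y = p0 y"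
      "Fpot A L N D lam p0 \<le> Fpot A L N D lam q" by blast
  define S where "S = {v\<in>L. q v = 1}"
  have qS: "q v = (if v \<in> S then 1 else 0)" for v
    using q(1,2) by (cases "v \<in> L") (auto simp: S_def p0_def)
  have qS2: "(q v)^2 = (if v \<in> S then 1 else 0)" for v
    using qS[of v] by simp
  have s1: "(\<Sum>v\<in>N a. q v) = real (card (N a \<inter> S))" if "a \<in> A" for a
    unfolding qS using sum_indicator_real fN that by blast
  have s2: "(\<Sum>v\<in>N a. (q v)^2) = real (card (N a \<inter> S))" if "a \<in> A" for a
    unfolding qS2 using sum_indicator_real fN that by blast
  have s3: "(\<Sum>v\<in>L. q v) = real (card S)"
  proof -
    have "(\<Sum>v\<in>L. q v) = real (card (L \<inter> S))" unfolding qS using sum_indicator_real fL by blast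
    moreover have "L \<inter> S = S" by (auto simp: S_def)
    ultimately show ?thesis by simp
  qed
  have Fq: "Fpot A L N D lam q = (\<Sum>a\<in>A. real (card (N a \<inter> S)) - ((real (card (N a \<inter> S)))^2 - real (card (N a \<inter> S))) / D)
       - lam * real (card S)"
  proof -
    have "(\<Sum>a\<in>A. (\<Sum>v\<in>N a. q v) - ((\<Sum>v\<in>N a. q v)^2 - (\<Sum>v\<in>N a. (q v)^2)) / D) =
     (\<Sum>a\<in>A. real (card (N a \<inter> S)) - ((real (card (N a \<inter> S)))^2 - real (card (N a \<inter> S))) / D)"
      by (rule sum.cong[OF refl]) (simp only: s1 s2)
    thus ?thesis unfolding Fpot_def s3 by (rule arg_cong[where f="\<lambda>x. x - lam * real (card S)"])
  qed
  show ?thesis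
  proof (intro exI conjI)
    show "S \<subseteq> L" by (auto simp: S_def)
    show "Fpot A L N D lam (\<lambda>v. if v \<in> L then \<beta> else 0) \<le>
     (\<Sum>a\<in>A. real (card (N a \<inter> S)) - ((real (card (N a \<inter> S)))^2 - real (card (N a \<inter> S))) / D)
       - lam * real (card S)"
      using q(3) Fq unfolding p0_def by (rule ord_le_eq_trans)
  qed
qed

lemma Fpot_const:
  assumes fL: "finite L" and NL: "\<forall>a\<in>A. N a \<subseteq> L"
  shows "Fpot A L N D lam (\<lambda>v. if v \<in> L then \<beta> else 0) =
     (\<Sum>a\<in>A. \<beta> * card (N a) - ((\<beta> * card (N a))^2 - \<beta>^2 * card (N a)) / D) - lam * (\<beta> * card L)"
proof -
  have fN: "finite (N a)" if "a \<in> A" for a using NL fL finite_subset that by blast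
  have e1: "(\<Sum>v\<in>N a. (if v \<in> L then \<beta> else 0)) = \<beta> * card (N a)" if "a \<in> A" for a
  proof -
    have "(\<Sum>v\<in>N a. (if v \<in> L then \<beta> else 0)) = (\<Sum>v\<in>N a. \<beta>)"
      using NL that by (intro sum.cong) auto
    thus ?thesis by simp
  qed
  have e2: "(\<Sum>v\<in>N a. (if v \<in> L then \<beta> else 0)^2) = \<beta>^2 * card (N a)" if "a \<in> A" for a
  proof -
    have "(\<Sum>v\<in>N a. (if v \<in> L then \<beta> else 0)^2) = (\<Sum>v\<in>N a. \<beta>^2)"
      using NL that by (intro sum.cong) auto
    thus ?thesis by simp
  qed
  have e3: "(\<Sum>v\<in>L. (if v \<in> L then \<beta> else 0)) = \<beta> * card L"
  proof -
    have "(\<Sum>v\<in>L. (if v \<in> L then \<beta> else (0::real))) = (\<Sum>v\<in>L. \<beta>)"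
      by (intro sum.cong) auto
    thus ?thesis by simp
  qed
  have "(\<Sum>a\<in>A. (\<Sum>v\<in>N a. (if v \<in> L then \<beta> else 0)) - ((\<Sum>v\<in>N a. (if v \<in> L then \<beta> else 0))^2 - (\<Sum>v\<in>N a. (if v \<in> L then \<beta> else 0)^2)) / D) =
      (\<Sum>a\<in>A. \<beta> * card (N a) - ((\<beta> * card (N a))^2 - \<beta>^2 * card (N a)) / D)"
    by (rule sum.cong[OF refl]) (simp only: e1 e2)
  thus ?thesis unfolding Fpot_def e3 by (rule arg_cong[where f="\<lambda>x. x - lam * (\<beta> * card L)"])
qed

lemma bip_core:
  fixes V L At :: "nat set" and E :: "nat set set" and d D r s th nn :: real
  assumes fV: "finite V" and c2: "\<forall>e\<in>E. card e = 2"
    and LV: "L \<subseteq> V" and AV: "At \<subseteq> V" and LA: "L \<inter> At = {}" and Ane: "At \<noteq> {}"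
    and dsAt: "real (\<Sum>v\<in>At. degree_in At E v) \<le> d * card At"
    and degL: "\<forall>v\<in>L. real (degree_in V E v) \<le> 2 * D"
    and cls: "\<forall>a\<in>At. th < real (degree_in L E a) \<and> real (degree_in L E a) \<le> r * th"
    and Dd: "D = d * s" and sr: "s = r * r" and r2: "2 \<le> r" and D8: "8 \<le> D"
    and thp: "0 < th" and rth: "D / 4 \<le> r * th"
    and nn: "real (card L) \<le> nn" and nnp: "0 < nn" and dp: "0 < d"
  shows "\<exists>U\<subseteq>V. U \<noteq> {} \<and>
     min ((\<Sum>a\<in>At. real (degree_in L E a)) / (4 * nn)) (D / (8 * r)) * card U
        \<le> real (\<Sum>v\<in>U. degree_in U E v) \<and>
     (\<forall>v\<in>U. real (degree_in U E v) \<le> 2 * D)"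
proof -
  have fL: "finite L" using LV fV finite_subset by blast
  have fA: "finite At" using AV fV finite_subset by blast
  define x where "x a = real (degree_in L E a)" for a
  define Mt where "Mt = (\<Sum>a\<in>At. x a)"
  define R where "R = {a\<in>At. D < real (degree_in At E a)}"
  define A1 where "A1 = At - R"
  have RA: "R \<subseteq> At" by (auto simp: R_def)
  have fR: "finite R" using RA fA finite_subset by blast
  have fA1: "finite A1" using fA by (simp add: A1_def)
  have A1A: "A1 \<subseteq> At" by (auto simp: A1_def)
  have spos: "0 < s" using sr r2 by simp
  have rpos: "0 < r" using r2 by simp
  have Dpos: "0 < D" using D8 by simp
  have cardR: "real (card R) * D \<le> d * card At"
  proof -
    have "real (card R) * D = (\<Sum>a\<in>R. D)" by simp
    also have "\<dots> \<le> (\<Sum>a\<in>R. real (degree_in At E a))"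
      by (rule sum_mono) (auto simp: R_def)
    also have "\<dots> \<le> (\<Sum>a\<in>At. real (degree_in At E a))"
      by (rule sum_mono2[OF fA RA]) auto
    also have "\<dots> = real (\<Sum>v\<in>At. degree_in At E v)" by simp
    finally show ?thesis using dsAt by linarith
  qed
  have MtA: "real (card At) * th \<le> Mt"
  proof -
    have "real (card At) * th = (\<Sum>a\<in>At. th)" by simp
    also have "\<dots> \<le> Mt" unfolding Mt_def x_def by (rule sum_mono) (use cls in auto)
    finally show ?thesis .
  qed
  have MR: "(\<Sum>a\<in>R. x a) \<le> Mt / 2"
  proof -
    have "(\<Sum>a\<in>R. x a) \<le> (\<Sum>a\<in>R. r * th)"
      by (rule sum_mono) (use cls RA in \<open>auto simp: x_def\<close>)
    also have "\<dots> = real (card R) * (r * th)" by simp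
    also have "\<dots> \<le> (d * card At / D) * (r * th)"
    proof -
      have "real (card R) \<le> d * card At / D" using cardR Dpos by (simp add: field_simps)
      thus ?thesis using rpos thp by (intro mult_right_mono) auto
    qed
    also have "\<dots> = card At * th / r"
      using Dd sr rpos dp by (simp add: field_simps)
    also have "\<dots> \<le> card At * th / 2"
      using r2 thp by (intro divide_left_mono) auto
    also have "\<dots> \<le> Mt / 2" using MtA by simp
    finally show ?thesis .
  qed
  define M1 where "M1 = (\<Sum>a\<in>A1. x a)"
  have M1eq: "M1 = Mt - (\<Sum>a\<in>R. x a)"
    unfolding M1_def Mt_def A1_def using sum_diff[OF fA RA, of x] by simp
  have M1ge: "Mt / 2 \<le> M1" using M1eq MR by simp
  have Mtpos: "0 < Mt"
  proof -
    have "0 < real (card At) * th" using Ane fA thp by (simp add: card_gt_0_iff)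
    thus ?thesis using MtA by linarith
  qed
  have M1pos: "0 < M1" using M1ge Mtpos by simp
  have MA1: "real (card A1) * th \<le> M1"
  proof -
    have "real (card A1) * th = (\<Sum>a\<in>A1. th)" by simp
    also have "\<dots> \<le> M1" unfolding M1_def x_def by (rule sum_mono) (use cls A1A in \<open>force\<close>)
    finally show ?thesis .
  qed
  define beta where "beta = D / (4 * (r * th))"
  have beta0: "0 \<le> beta" using Dpos rpos thp by (simp add: beta_def)
  have beta1: "beta \<le> 1" using rth rpos thp by (simp add: beta_def field_simps)
  have betapos: "0 < beta" using Dpos rpos thp by (simp add: beta_def)
  have betath: "beta * (r * th) = D / 4" using rpos thp by (simp add: beta_def)
  define N where "N a = {v\<in>L. {v,a}\<in>E}" for a
  have NL: "\<forall>a\<in>A1. N a \<subseteq> L" by (auto simp: N_def)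
  have cN: "real (card (N a)) = x a" for a by (simp add: N_def x_def degree_in_def)
  define lam where "lam = min (M1 / (4 * nn)) (beta * th / 4)"
  define Dp where "Dp = D - 1"
  have Dppos: "0 < Dp" using D8 by (simp add: Dp_def)
  have lam0: "0 \<le> lam" using M1pos nnp beta0 thp by (simp add: lam_def)
  obtain S where SL: "S \<subseteq> L" and
    FS: "Fpot A1 L N Dp lam (\<lambda>v. if v \<in> L then beta else 0) \<le>
     (\<Sum>a\<in>A1. real (card (N a \<inter> S)) - ((real (card (N a \<inter> S)))^2 - real (card (N a \<inter> S))) / Dp)
       - lam * real (card S)"
    using round_exists[OF fA1 fL NL beta0 beta1] by blast
  have F0: "Fpot A1 L N Dp lam (\<lambda>v. if v \<in> L then beta else 0) =
     (\<Sum>a\<in>A1. beta * card (N a) - ((beta * card (N a))^2 - beta^2 * card (N a)) / Dp) - lam * (beta * card L)"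
    by (rule Fpot_const[OF fL NL])
  have term_lb: "(2/3) * (beta * x a) \<le> beta * card (N a) - ((beta * card (N a))^2 - beta^2 * card (N a)) / Dp"
    if a: "a \<in> A1" for a
  proof -
    have xa: "0 \<le> x a" "x a \<le> r * th" using cls a A1A by (auto simp: x_def)
    have bx: "beta * x a \<le> D / 4" using betath xa beta0 by (metis mult_left_mono)
    have bx0: "0 \<le> beta * x a" using xa beta0 by simp
    have "(beta * x a)^2 \<le> (beta * x a) * (D / 4)"
      unfolding power2_eq_square using bx bx0 by (intro mult_left_mono) auto
    also have "\<dots> \<le> (beta * x a) * (Dp / 3)"
      using bx0 D8 by (intro mult_left_mono) (auto simp: Dp_def)
    finally have "(beta * x a)^2 / Dp \<le> (beta * x a) / 3"
      using Dppos by (simp add: field_simps)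
    moreover have "0 \<le> beta^2 * x a / Dp" using xa Dppos by simp
    moreover have "beta * x a - ((beta * x a)^2 - beta^2 * x a) / Dp = beta * x a - (beta * x a)^2 / Dp + beta^2 * x a / Dp"
      by (simp add: diff_divide_distrib)
    ultimately show ?thesis unfolding cN by linarith
  qed
  have F0lb: "(2/3) * beta * M1 - lam * (beta * card L) \<le> Fpot A1 L N Dp lam (\<lambda>v. if v \<in> L then beta else 0)"
  proof -
    have "(2/3) * beta * M1 = (\<Sum>a\<in>A1. (2/3) * (beta * x a))"
      unfolding M1_def by (simp add: sum_distrib_left mult.assoc)
    also have "\<dots> \<le> (\<Sum>a\<in>A1. beta * card (N a) - ((beta * card (N a))^2 - beta^2 * card (N a)) / Dp)"
      by (rule sum_mono) (rule term_lb)
    finally show ?thesis unfolding F0 by linarith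
  qed
  have lamL: "lam * card L \<le> M1 / 4"
  proof -
    have "lam * card L \<le> (M1 / (4 * nn)) * nn"
      using nn lam0 by (intro mult_mono) (auto simp: lam_def)
    thus ?thesis using nnp by simp
  qed
  have lamA: "lam * card A1 \<le> beta * M1 / 4"
  proof -
    have "lam * card A1 \<le> (beta * th / 4) * card A1" by (intro mult_right_mono) (auto simp: lam_def)
    also have "\<dots> = beta * (card A1 * th) / 4" by simp
    also have "\<dots> \<le> beta * M1 / 4" using MA1 beta0 by (intro divide_right_mono mult_left_mono) auto
    finally show ?thesis .
  qed
  define k where "k a = card (N a \<inter> S)" for a
  define A2 where "A2 = {a\<in>A1. real (k a) \<le> D}"
  have A2A1: "A2 \<subseteq> A1" by (auto simp: A2_def)
  have fA2: "finite A2" using fA1 A2A1 finite_subset by blast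
  have hsum: "(\<Sum>a\<in>A1. real (k a) - ((real (k a))^2 - real (k a)) / Dp) \<le> (\<Sum>a\<in>A2. real (k a))"
  proof -
    have "(\<Sum>a\<in>A1. real (k a) - ((real (k a))^2 - real (k a)) / Dp) \<le> (\<Sum>a\<in>A1. if a \<in> A2 then real (k a) else 0)"
    proof (rule sum_mono)
      fix a assume a: "a \<in> A1"
      show "real (k a) - ((real (k a))^2 - real (k a)) / Dp \<le> (if a \<in> A2 then real (k a) else 0)"
      proof (cases "a \<in> A2")
        case True
        have "real (k a) \<le> (real (k a))^2"
          by (cases "k a") (auto simp: power2_eq_square)
        thus ?thesis using True Dppos by simp
      next
        case False
        hence kD: "D < real (k a)" using a by (auto simp: A2_def)
        hence "Dp \<le> real (k a) - 1" by (simp add: Dp_def)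
        hence "real (k a) * Dp \<le> real (k a) * (real (k a) - 1)" by (intro mult_left_mono) auto
        hence "real (k a) \<le> ((real (k a))^2 - real (k a)) / Dp"
          using Dppos by (simp add: field_simps power2_eq_square)
        thus ?thesis using False by simp
      qed
    qed
    also have "\<dots> = (\<Sum>a\<in>A2. real (k a))"
    proof -
      have "A2 \<inter> A1 = A2" using A2A1 by blast
      thus ?thesis using fA1 by (simp add: sum.If_cases Int_def[symmetric] Int_commute)
    qed
    finally show ?thesis .
  qed
  have key: "lam * (card A1 + card S) + beta * M1 / 6 \<le> (\<Sum>a\<in>A2. real (k a))"
  proof -
    have "lam * (beta * card L) \<le> beta * (M1 / 4)" using lamL beta0
      by (metis mult.left_commute mult_left_mono)
    hence "lam * card A1 + beta * M1 / 6 \<le> Fpot A1 L N Dp lam (\<lambda>v. if v \<in> L then beta else 0)"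
      using F0lb lamA by (simp add: field_simps)
    also have "\<dots> \<le> (\<Sum>a\<in>A1. real (k a) - ((real (k a))^2 - real (k a)) / Dp) - lam * real (card S)"
      using FS unfolding k_def .
    finally show ?thesis using hsum by (simp add: algebra_simps)
  qed
  define U where "U = A2 \<union> S"
  have A2At: "A2 \<subseteq> At" using A2A1 A1A by blast
  have UV: "U \<subseteq> V" using A2At AV SL LV by (auto simp: U_def)
  have fS: "finite S" using SL fL finite_subset by blast
  have disj: "A2 \<inter> S = {}" using A2At SL LA by blast
  have kdeg: "k a = degree_in S E a" for a
  proof -
    have "N a \<inter> S = {u\<in>S. {u,a}\<in>E}" using SL by (auto simp: N_def)
    thus ?thesis by (simp add: k_def degree_in_def)
  qed
  have fU: "finite U" using fA2 fS by (simp add: U_def)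
  have dsU: "2 * (\<Sum>a\<in>A2. real (k a)) \<le> real (\<Sum>v\<in>U. degree_in U E v)"
  proof -
    have "(\<Sum>v\<in>U. degree_in U E v) = (\<Sum>v\<in>A2. degree_in U E v) + (\<Sum>v\<in>S. degree_in U E v)"
      unfolding U_def using fA2 fS disj by (rule sum.union_disjoint)
    moreover have "(\<Sum>a\<in>A2. k a) \<le> (\<Sum>v\<in>A2. degree_in U E v)"
      by (rule sum_mono) (auto simp: kdeg U_def intro!: deg_mono fU[unfolded U_def])
    moreover have "(\<Sum>a\<in>A2. k a) \<le> (\<Sum>v\<in>S. degree_in U E v)"
    proof -
      have "(\<Sum>a\<in>A2. k a) = (\<Sum>v\<in>S. degree_in A2 E v)"
        unfolding kdeg using cross_sym[OF fA2 fS] by simp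
      also have "\<dots> \<le> (\<Sum>v\<in>S. degree_in U E v)"
        by (rule sum_mono) (auto simp: U_def intro!: deg_mono fU[unfolded U_def])
      finally show ?thesis .
    qed
    ultimately have "2 * (\<Sum>a\<in>A2. k a) \<le> (\<Sum>v\<in>U. degree_in U E v)" by linarith
    hence "real (2 * (\<Sum>a\<in>A2. k a)) \<le> real (\<Sum>v\<in>U. degree_in U E v)" by (rule of_nat_mono)
    thus ?thesis by simp
  qed
  have cardU: "real (card U) \<le> real (card A1) + real (card S)"
  proof -
    have "card U \<le> card A2 + card S" unfolding U_def by (rule card_Un_le)
    moreover have "card A2 \<le> card A1" using fA1 A2A1 by (rule card_mono)
    ultimately show ?thesis by simp
  qed
  have sumk_pos: "0 < (\<Sum>a\<in>A2. real (k a))"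
  proof -
    have "0 < beta * M1 / 6" using betapos M1pos by simp
    moreover have "0 \<le> lam * (card A1 + card S)" using lam0 by simp
    ultimately show ?thesis using key by linarith
  qed
  have Une: "U \<noteq> {}"
  proof
    assume "U = {}"
    hence "A2 = {}" by (simp add: U_def)
    thus False using sumk_pos by simp
  qed
  have lam2: "min (Mt / (4 * nn)) (D / (8 * r)) \<le> 2 * lam"
  proof -
    have "Mt / (4 * nn) \<le> 2 * (M1 / (4 * nn))" using M1ge nnp by (simp add: field_simps)
    moreover have "D / (8 * r) = 2 * (beta * th / 4)" using rpos thp by (simp add: beta_def field_simps)
    ultimately show ?thesis unfolding lam_def by linarith
  qed
  have main: "min (Mt / (4 * nn)) (D / (8 * r)) * card U \<le> real (\<Sum>v\<in>U. degree_in U E v)"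
  proof -
    have "min (Mt / (4 * nn)) (D / (8 * r)) * card U \<le> 2 * lam * card U"
      using lam2 by (intro mult_right_mono) auto
    also have "\<dots> \<le> 2 * lam * (card A1 + card S)"
      using cardU lam0 by (intro mult_left_mono) auto
    also have "\<dots> \<le> 2 * (\<Sum>a\<in>A2. real (k a))"
    proof -
      have "0 < beta * M1" using betapos M1pos by simp
      thus ?thesis using key by linarith
    qed
    also have "\<dots> \<le> real (\<Sum>v\<in>U. degree_in U E v)" by (rule dsU)
    finally show ?thesis .
  qed
  have degU: "\<forall>v\<in>U. real (degree_in U E v) \<le> 2 * D"
  proof
    fix v assume v: "v \<in> U"
    show "real (degree_in U E v) \<le> 2 * D"
    proof (cases "v \<in> S")
      case True
      hence "degree_in U E v \<le> degree_in V E v" using fV UV by (intro deg_mono)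
      moreover have "real (degree_in V E v) \<le> 2 * D" using degL True SL by auto
      ultimately show ?thesis by linarith
    next
      case False
      hence vA2: "v \<in> A2" using v by (simp add: U_def)
      have "degree_in U E v = degree_in (U \<inter> At) E v + degree_in (U - At) E v"
        using fU by (rule deg_split)
      moreover have "U \<inter> At = A2" using A2At disj SL LA by (auto simp: U_def)
      moreover have "U - At = S" using A2At SL LA by (auto simp: U_def)
      ultimately have split: "degree_in U E v = degree_in A2 E v + degree_in S E v" by simp
      have "degree_in A2 E v \<le> degree_in At E v" using fA A2At by (rule deg_mono)
      moreover have "real (degree_in At E v) \<le> D" using vA2 A2A1 by (auto simp: A1_def R_def)
      moreover have "real (degree_in S E v) \<le> D" using vA2 kdeg by (auto simp: A2_def)
      ultimately show ?thesis using split by simp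
    qed
  qed
  show ?thesis
    using UV Une main degU unfolding Mt_def x_def by blast
qed

lemma cover_class:
  fixes x :: real and Th :: "nat \<Rightarrow> real"
  shows "Th 0 < x \<Longrightarrow> x \<le> Th T \<Longrightarrow> \<exists>t<T. Th t < x \<and> x \<le> Th (Suc t)"
proof (induction T)
  case 0 thus ?case by simp
next
  case (Suc T)
  show ?case
  proof (cases "x \<le> Th T")
    case True
    then obtain t where "t < T" "Th t < x \<and> x \<le> Th (Suc t)" using Suc by blast
    thus ?thesis by (intro exI[of _ t]) auto
  next
    case False thus ?thesis using Suc.prems by (intro exI[of _ T]) auto
  qed
qed

lemma class_pigeon:
  fixes x :: "nat \<Rightarrow> real" and Th :: "nat \<Rightarrow> real"
  assumes fH: "finite H" and x0: "\<forall>h\<in>H. 0 \<le> x h" and xT: "\<forall>h\<in>H. x h \<le> Th T" and T0: "0 < T"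
  shows "\<exists>t<T. (\<Sum>h\<in>{h\<in>H. Th 0 < x h}. x h) \<le> real T * (\<Sum>h\<in>{h\<in>H. Th t < x h \<and> x h \<le> Th (Suc t)}. x h)"
proof -
  define C where "C t = (\<Sum>h\<in>{h\<in>H. Th t < x h \<and> x h \<le> Th (Suc t)}. x h)" for t
  define S0 where "S0 = (\<Sum>h\<in>{h\<in>H. Th 0 < x h}. x h)"
  have Ceq: "C t = (\<Sum>h\<in>H. if Th t < x h \<and> x h \<le> Th (Suc t) then x h else 0)" for t
    unfolding C_def using fH by (simp add: sum.inter_filter)
  have "S0 = (\<Sum>h\<in>H. if Th 0 < x h then x h else 0)"
    unfolding S0_def using fH by (simp add: sum.inter_filter)
  also have "\<dots> \<le> (\<Sum>h\<in>H. \<Sum>t<T. if Th t < x h \<and> x h \<le> Th (Suc t) then x h else 0)"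
  proof (rule sum_mono)
    fix h assume h: "h \<in> H"
    have nn: "\<forall>t\<in>{..<T}. 0 \<le> (if Th t < x h \<and> x h \<le> Th (Suc t) then x h else 0)"
      using x0 h by auto
    show "(if Th 0 < x h then x h else 0) \<le> (\<Sum>t<T. if Th t < x h \<and> x h \<le> Th (Suc t) then x h else 0)"
    proof (cases "Th 0 < x h")
      case True
      then obtain t where t: "t < T" "Th t < x h \<and> x h \<le> Th (Suc t)"
        using cover_class[of Th "x h" T] xT h by blast
      have "x h = (if Th t < x h \<and> x h \<le> Th (Suc t) then x h else 0)" using t by simp
      also have "\<dots> \<le> (\<Sum>t<T. if Th t < x h \<and> x h \<le> Th (Suc t) then x h else 0)"
        by (rule member_le_sum) (use t nn in auto)
      finally show ?thesis using True by simp
    next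
      case False
      have "0 \<le> (\<Sum>t<T. if Th t < x h \<and> x h \<le> Th (Suc t) then x h else 0)"
        using nn by (intro sum_nonneg) blast
      thus ?thesis using False by simp
    qed
  qed
  also have "\<dots> = (\<Sum>t<T. C t)" unfolding Ceq by (rule sum.swap)
  finally have S0le: "S0 \<le> (\<Sum>t<T. C t)" .
  show ?thesis
  proof (rule ccontr)
    assume "\<not> ?thesis"
    hence lt: "\<forall>t<T. real T * C t < S0" unfolding C_def S0_def by auto
    have "(\<Sum>t<T. C t) < (\<Sum>t<T. S0 / real T)"
      using lt T0 by (intro sum_strict_mono) (auto simp: field_simps)
    also have "\<dots> = S0" using T0 by simp
    finally show False using S0le by simp
  qed
qed

lemma minimal_dense:
  fixes V :: "nat set" and d :: real
  assumes fV: "finite V" and Vne: "V \<noteq> {}" and dense: "d * card V \<le> real (\<Sum>v\<in>V. degree_in V E v)"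
  shows "\<exists>W\<subseteq>V. W \<noteq> {} \<and> d * card W \<le> real (\<Sum>v\<in>W. degree_in W E v) \<and>
     (\<forall>Y\<subseteq>W. Y \<noteq> W \<longrightarrow> real (\<Sum>v\<in>Y. degree_in Y E v) \<le> d * card Y)"
proof -
  define P where "P W \<longleftrightarrow> W \<subseteq> V \<and> W \<noteq> {} \<and> d * card W \<le> real (\<Sum>v\<in>W. degree_in W E v)" for W
  have "P V" using Vne dense by (simp add: P_def)
  then obtain W where W: "P W" and Wmin: "\<forall>Y. P Y \<longrightarrow> card W \<le> card Y"
    using ex_has_least_nat[of P V card] by blast
  have fW: "finite W" using W fV finite_subset by (auto simp: P_def)
  show ?thesis
  proof (intro exI[of _ W] conjI allI impI)
    show "W \<subseteq> V" "W \<noteq> {}" "d * card W \<le> real (\<Sum>v\<in>W. degree_in W E v)" using W by (auto simp: P_def)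
  next
    fix Y assume Y: "Y \<subseteq> W" "Y \<noteq> W"
    show "real (\<Sum>v\<in>Y. degree_in Y E v) \<le> d * card Y"
    proof (cases "Y = {}")
      case True thus ?thesis by simp
    next
      case False
      have "card Y < card W" using Y fW by (intro psubset_card_mono) auto
      hence "\<not> P Y" using Wmin by force
      moreover have "Y \<subseteq> V" using Y W by (auto simp: P_def)
      ultimately show ?thesis using False by (auto simp: P_def)
    qed
  qed
qed

lemma numfacts:
  fixes d :: real
  assumes d16: "16 < d"
  shows "sqrt d * sqrt d = d" "sqrt (sqrt d) * sqrt (sqrt d) = sqrt d" "4 \<le> sqrt d"
    "2 \<le> sqrt (sqrt d)" "d powr (3/2) = d * sqrt d" "ln (sqrt (sqrt d)) = ln d / 4"
proof -
  show "sqrt d * sqrt d = d" using d16 by simp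
  have "4 \<le> sqrt d"
  proof (rule real_le_rsqrt)
    show "4^2 \<le> d" using d16 by simp
  qed
  thus "4 \<le> sqrt d" .
  show "sqrt (sqrt d) * sqrt (sqrt d) = sqrt d" using d16 by simp
  show "2 \<le> sqrt (sqrt d)"
  proof (rule real_le_rsqrt)
    have "(2::real)^2 = 4" by simp
    thus "2^2 \<le> sqrt d" using \<open>4 \<le> sqrt d\<close> by linarith
  qed
  have "d powr (3/2) = d powr (1 + 1/2)" by simp
  also have "\<dots> = d powr 1 * d powr (1/2)" by (rule powr_add)
  also have "\<dots> = d * sqrt d" using d16 by (simp add: powr_half_sqrt)
  finally show "d powr (3/2) = d * sqrt d" .
  have "0 < sqrt d" using d16 by simp
  hence "ln (sqrt (sqrt d)) = ln (sqrt d) / 2" by (simp add: ln_sqrt)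
  also have "\<dots> = ln d / 4" using d16 by (simp add: ln_sqrt)
  finally show "ln (sqrt (sqrt d)) = ln d / 4" .
qed

lemma L_nonempty:
  fixes V :: "nat set" and d D :: real
  assumes fV: "finite V" and c2: "\<forall>e\<in>E. card e = 2" and Vne: "V \<noteq> {}"
    and minl: "\<forall>Y\<subseteq>V. Y \<noteq> V \<longrightarrow> real (\<Sum>v\<in>Y. degree_in Y E v) \<le> d * card Y"
    and dense: "d * card V \<le> real (\<Sum>v\<in>V. degree_in V E v)"
    and dpos: "1 \<le> d" and Dd: "4 * d \<le> D"
  shows "\<exists>v\<in>V. real (degree_in V E v) \<le> 2 * D"
proof (rule ccontr)
  assume "\<not> ?thesis"
  hence big: "\<forall>v\<in>V. 2 * D < real (degree_in V E v)" by auto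
  have fin: "finite (degree_in V E ` V)" using fV by simp
  have ne: "degree_in V E ` V \<noteq> {}" using Vne by simp
  obtain v0 where v0: "v0 \<in> V" "degree_in V E v0 = Min (degree_in V E ` V)"
    using Min_in[OF fin ne] by auto
  have vmin: "degree_in V E v0 \<le> degree_in V E v" if "v \<in> V" for v
    using v0(2) Min_le[OF fin] that by simp
  define dl where "dl = real (degree_in V E v0)"
  define n where "n = real (card V)"
  have dlbig: "2 * D < dl" unfolding dl_def by (rule big[rule_format, OF v0(1)])
  have "n * dl \<le> real (\<Sum>v\<in>V. degree_in V E v)"
  proof -
    have "n * dl = (\<Sum>v\<in>V. dl)" by (simp add: n_def)
    also have "\<dots> \<le> (\<Sum>v\<in>V. real (degree_in V E v))" using vmin by (intro sum_mono) (simp add: dl_def)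
    finally show ?thesis by simp
  qed
  moreover have "real (\<Sum>v\<in>V. degree_in V E v) = real (\<Sum>u\<in>V-{v0}. degree_in (V-{v0}) E u) + 2 * dl"
    using ds_remove[OF fV c2 v0(1)] by (simp add: dl_def)
  moreover have "real (\<Sum>u\<in>V-{v0}. degree_in (V-{v0}) E u) \<le> d * card (V - {v0})"
    using minl v0(1) by auto
  moreover have "card (V - {v0}) = card V - 1" using v0(1) fV by simp
  moreover have "1 \<le> card V" using Vne fV by (simp add: Suc_le_eq card_gt_0_iff)
  ultimately have A: "n * dl \<le> d * (n - 1) + 2 * dl" by (simp add: n_def of_nat_diff)
  have "degree_in V E v0 \<le> card V - 1" by (rule deg_le_card[OF fV c2 v0(1)])
  hence B: "dl \<le> n - 1" using \<open>1 \<le> card V\<close> by (simp add: dl_def n_def of_nat_diff)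
  have dl8: "8 * d < dl" using dlbig Dd by linarith
  have n3: "3 \<le> n" using B dl8 dpos by linarith
  have "(n - 2) * (8 * d) \<le> (n - 2) * dl" using dl8 n3 by (intro mult_left_mono) auto
  also have "\<dots> \<le> d * (n - 1)" using A by (simp add: algebra_simps)
  finally have "8 * (n - 2) * d \<le> (n - 1) * d" by (simp add: algebra_simps)
  hence "8 * (n - 2) \<le> n - 1" using dpos by simp
  thus False using n3 by (simp add: algebra_simps)
qed

lemma main_core:
  fixes V :: "nat set" and d :: real
  assumes fV: "finite V" and c2: "\<forall>e\<in>E. card e = 2" and Vne: "V \<noteq> {}" and d16: "16 < d"
    and dense: "d * card V \<le> real (\<Sum>v\<in>V. degree_in V E v)"
    and minl: "\<forall>Y\<subseteq>V. Y \<noteq> V \<longrightarrow> real (\<Sum>v\<in>Y. degree_in Y E v) \<le> d * card Y"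
  shows "\<exists>U\<subseteq>V. U \<noteq> {} \<and> (d * ln d / (80 * ln (real (card V)))) * card U \<le> real (\<Sum>v\<in>U. degree_in U E v)
     \<and> (\<forall>v\<in>U. real (degree_in U E v) \<le> 2 * d powr (3/2))"
proof -
  define n where "n = real (card V)"
  define s where "s = sqrt d"
  define r where "r = sqrt s"
  define D where "D = d * s"
  have ss: "s * s = d" and rr: "r * r = s" and s4: "4 \<le> s" and r2: "2 \<le> r"
    and Dpow: "d powr (3/2) = D" and lnr: "ln r = ln d / 4"
    using numfacts[OF d16] by (auto simp: s_def r_def D_def)
  have dpos: "0 < d" using d16 by simp
  have D64: "64 \<le> D"
  proof -
    have "16 * 4 \<le> d * s" using d16 s4 by (intro mult_mono) auto
    thus ?thesis by (simp add: D_def)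
  qed
  define dsV where "dsV = real (\<Sum>v\<in>V. degree_in V E v)"
  have dsVge: "d * n \<le> dsV" using dense by (simp add: dsV_def n_def)
  have cV: "1 \<le> card V" using Vne fV by (simp add: Suc_le_eq card_gt_0_iff)
  have dsle: "dsV \<le> n * (n - 1)"
  proof -
    have "(\<Sum>v\<in>V. degree_in V E v) \<le> (\<Sum>v\<in>V. card V - 1)"
      by (rule sum_mono) (rule deg_le_card[OF fV c2])
    hence "(\<Sum>v\<in>V. degree_in V E v) \<le> card V * (card V - 1)" by simp
    hence "dsV \<le> real (card V * (card V - 1))" unfolding dsV_def by (rule of_nat_mono)
    thus ?thesis using cV by (simp add: n_def of_nat_diff)
  qed
  have npos: "0 < n" using cV by (simp add: n_def)
  have dn: "d \<le> n - 1"
  proof -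
    have "d * n \<le> (n - 1) * n" using dsVge dsle by (simp add: algebra_simps)
    thus ?thesis using npos by simp
  qed
  have lnd: "0 < ln d" using d16 by simp
  have lndn: "ln d < ln n" using dn dpos by simp
  have lnn: "0 < ln n" using lnd lndn by simp
  define L where "L = {v\<in>V. real (degree_in V E v) \<le> 2 * D}"
  define H where "H = V - L"
  have LV: "L \<subseteq> V" by (auto simp: L_def)
  have HV: "H \<subseteq> V" by (auto simp: H_def)
  have fL: "finite L" using LV fV finite_subset by blast
  have fH: "finite H" using HV fV finite_subset by blast
  have LH: "L \<inter> H = {}" by (auto simp: H_def)
  have VLH: "V = L \<union> H" using LV by (auto simp: H_def)
  have Lne: "L \<noteq> {}"
  proof -
    have "4 * d \<le> D" using s4 dpos unfolding D_def by (simp add: mult.commute)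
    then obtain v where "v \<in> V" "real (degree_in V E v) \<le> 2 * D"
      using L_nonempty[OF fV c2 Vne minl dense] d16 by force
    thus ?thesis by (auto simp: L_def)
  qed
  have HneV: "H \<noteq> V" using Lne LV by (auto simp: H_def)
  have cardL: "real (card L) \<le> n" using card_mono[OF fV LV] by (simp add: n_def)
  define x where "x h = real (degree_in L E h)" for h
  define M where "M = (\<Sum>h\<in>H. x h)"
  define dsL where "dsL = real (\<Sum>v\<in>L. degree_in L E v)"
  define dsH where "dsH = real (\<Sum>v\<in>H. degree_in H E v)"
  have degsplit: "degree_in V E v = degree_in L E v + degree_in H E v" for v
  proof -
    have "degree_in V E v = degree_in (V \<inter> L) E v + degree_in (V - L) E v" using fV by (rule deg_split)
    moreover have "V \<inter> L = L" using LV by auto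
    ultimately show ?thesis by (simp add: H_def)
  qed
  have split: "dsV = dsL + dsH + 2 * M"
  proof -
    have "(\<Sum>v\<in>V. degree_in V E v) = (\<Sum>v\<in>L. degree_in V E v) + (\<Sum>v\<in>H. degree_in V E v)"
      unfolding VLH using fL fH LH by (rule sum.union_disjoint)
    also have "\<dots> = ((\<Sum>v\<in>L. degree_in L E v) + (\<Sum>v\<in>L. degree_in H E v)) +
        ((\<Sum>v\<in>H. degree_in L E v) + (\<Sum>v\<in>H. degree_in H E v))"
      unfolding degsplit by (simp add: sum.distrib)
    also have "(\<Sum>v\<in>L. degree_in H E v) = (\<Sum>v\<in>H. degree_in L E v)" by (rule cross_sym[OF fL fH])
    finally have "(\<Sum>v\<in>V. degree_in V E v) = (\<Sum>v\<in>L. degree_in L E v) + (\<Sum>v\<in>H. degree_in H E v) + 2 * (\<Sum>v\<in>H. degree_in L E v)"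
      by simp
    hence "dsV = dsL + dsH + 2 * real (\<Sum>v\<in>H. degree_in L E v)"
      unfolding dsV_def dsL_def dsH_def by simp
    moreover have "real (\<Sum>v\<in>H. degree_in L E v) = M" by (simp add: M_def x_def)
    ultimately show ?thesis by simp
  qed
  have coef_le: "d * ln d / (80 * ln n) \<le> d / 80"
  proof -
    have "ln d / ln n \<le> 1" using lndn lnn by simp
    hence "d * (ln d / ln n) \<le> d * 1" using dpos by (intro mult_left_mono) auto
    thus ?thesis by simp
  qed
  have coef0: "0 \<le> d * ln d / (80 * ln n)" using dpos lnd lnn by simp
  have degV_L: "real (degree_in U E v) \<le> 2 * D" if "U \<subseteq> V" "v \<in> L" for U v
  proof -
    have "degree_in U E v \<le> degree_in V E v" using fV that(1) by (rule deg_mono)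
    moreover have "real (degree_in V E v) \<le> 2 * D" using that(2) by (simp add: L_def)
    ultimately show ?thesis by linarith
  qed
  show ?thesis
  proof (cases "dsV / 4 \<le> dsL")
    case True
    have "(d * ln d / (80 * ln n)) * card L \<le> (d / 4) * n"
    proof (rule mult_mono)
      show "d * ln d / (80 * ln n) \<le> d / 4" using coef_le dpos by linarith
    qed (use cardL dpos coef0 in auto)
    also have "\<dots> \<le> dsL" using True dsVge by simp
    finally have A: "(d * ln d / (80 * ln n)) * card L \<le> real (\<Sum>v\<in>L. degree_in L E v)"
      unfolding dsL_def .
    show ?thesis
    proof (intro exI[of _ L] conjI)
      show "L \<subseteq> V" "L \<noteq> {}" by (rule LV, rule Lne)
      show "(d * ln d / (80 * ln (real (card V)))) * card L \<le> real (\<Sum>v\<in>L. degree_in L E v)"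
        using A by (simp add: n_def)
      show "\<forall>v\<in>L. real (degree_in L E v) \<le> 2 * d powr (3/2)"
        using degV_L[OF LV] Dpow by simp
    qed
  next
    case False
    hence dsLlt: "dsL < dsV / 4" by simp
    have Dpos: "0 < D" using D64 by simp
    have cardH: "real (card H) * (2 * D) \<le> dsV"
    proof -
      have "real (card H) * (2 * D) = (\<Sum>h\<in>H. 2 * D)" by simp
      also have "\<dots> \<le> (\<Sum>h\<in>H. real (degree_in V E h))"
        by (rule sum_mono) (auto simp: H_def L_def)
      also have "\<dots> \<le> (\<Sum>h\<in>V. real (degree_in V E h))"
        by (rule sum_mono2[OF fV HV]) auto
      finally show ?thesis by (simp add: dsV_def)
    qed
    have dsH: "dsH \<le> d * card H" using minl HV HneV by (simp add: dsH_def)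
    have dsH8: "dsH \<le> dsV / 8"
    proof -
      have "real (card H) \<le> dsV / (2 * D)" using cardH Dpos by (simp add: field_simps)
      hence "d * card H \<le> d * (dsV / (2 * D))" using dpos by (intro mult_left_mono) auto
      also have "\<dots> = dsV / (2 * s)" using dpos by (simp add: D_def field_simps)
      also have "\<dots> \<le> dsV / 8"
      proof -
        have "0 \<le> dsV" using dsVge dpos npos by (smt (verit) mult_pos_pos)
        thus ?thesis using s4 by (intro divide_left_mono) auto
      qed
      finally show ?thesis using dsH by linarith
    qed
    have Mge: "5 * dsV / 16 \<le> M" using split dsLlt dsH8 by linarith
    define Lo where "Lo = {h\<in>H. \<not> D / 8 < x h}"
    define Hi where "Hi = {h\<in>H. D / 8 < x h}"
    have Msplit: "M = (\<Sum>h\<in>Hi. x h) + (\<Sum>h\<in>Lo. x h)"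
    proof -
      have "H = Hi \<union> Lo" by (auto simp: Hi_def Lo_def)
      moreover have "Hi \<inter> Lo = {}" by (auto simp: Hi_def Lo_def)
      moreover have "finite Hi" "finite Lo" using fH by (auto simp: Hi_def Lo_def)
      ultimately show ?thesis unfolding M_def by (simp add: sum.union_disjoint)
    qed
    have Lole: "(\<Sum>h\<in>Lo. x h) \<le> dsV / 16"
    proof -
      have "(\<Sum>h\<in>Lo. x h) \<le> (\<Sum>h\<in>Lo. D / 8)" by (rule sum_mono) (auto simp: Lo_def)
      also have "\<dots> = real (card Lo) * (D / 8)" by simp
      also have "\<dots> \<le> real (card H) * (D / 8)"
        using card_mono[OF fH, of Lo] Dpos by (intro mult_right_mono) (auto simp: Lo_def)
      also have "\<dots> = real (card H) * (2 * D) / 16" by simp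
      also have "\<dots> \<le> dsV / 16" using cardH by (intro divide_right_mono) auto
      finally show ?thesis .
    qed
    have Hige: "dsV / 4 \<le> (\<Sum>h\<in>Hi. x h)" using Msplit Lole Mge by linarith
    define Th where "Th t = D / 8 * r ^ t" for t
    define q where "q = ln n / ln r"
    define T where "T = nat \<lceil>q\<rceil>"
    have lnrpos: "0 < ln r" using lnr lnd by simp
    have qpos: "0 < q" using lnn lnrpos by (simp add: q_def)
    have Tq: "q \<le> real T" "real T \<le> q + 1"
    proof -
      have "0 \<le> \<lceil>q\<rceil>" using qpos by simp
      hence "real T = real_of_int \<lceil>q\<rceil>" by (simp add: T_def)
      thus "q \<le> real T" "real T \<le> q + 1" by (simp_all add: le_of_int_ceiling of_int_ceiling_le_add_one)
    qed
    have T0: "0 < T" using Tq qpos by simp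
    have rpos: "0 < r" using r2 by simp
    have rT: "n \<le> r ^ T"
    proof -
      have "r ^ T = r powr (real T)" using rpos by (simp add: powr_realpow)
      also have "r powr q \<le> r powr (real T)" using Tq r2 by (intro powr_mono) auto
      moreover have "r powr q = n" using rpos npos lnrpos
        by (simp add: q_def powr_def)
      ultimately show ?thesis by simp
    qed
    have ThT: "n \<le> Th T"
    proof -
      have "1 * r ^ T \<le> D / 8 * r ^ T" using D64 rpos by (intro mult_right_mono) auto
      thus ?thesis using rT by (simp add: Th_def)
    qed
    have xle: "x h \<le> Th T" if "h \<in> H" for h
    proof -
      have "degree_in L E h \<le> card L" unfolding degree_in_def using fL by (intro card_mono) auto
      hence "x h \<le> n" using cardL by (simp add: x_def)
      thus ?thesis using ThT by simp
    qed
    have Th0: "Th 0 = D / 8" by (simp add: Th_def)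
    obtain t where tT: "t < T" and pig: "(\<Sum>h\<in>{h\<in>H. Th 0 < x h}. x h) \<le>
        real T * (\<Sum>h\<in>{h\<in>H. Th t < x h \<and> x h \<le> Th (Suc t)}. x h)"
    proof -
      have x0: "\<forall>h\<in>H. 0 \<le> x h" by (simp add: x_def)
      have xT: "\<forall>h\<in>H. x h \<le> Th T" using xle by blast
      show ?thesis using class_pigeon[of H x Th T, OF fH x0 xT T0] that by blast
    qed
    define At where "At = {h\<in>H. Th t < x h \<and> x h \<le> Th (Suc t)}"
    define Ct where "Ct = (\<Sum>h\<in>At. x h)"
    have Ctge: "dsV / 4 \<le> real T * Ct" using pig Hige unfolding At_def Ct_def Hi_def Th0 by linarith
    have dsVpos: "0 < dsV" using dsVge dpos npos by (smt (verit) mult_pos_pos)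
    have Ane: "At \<noteq> {}"
    proof
      assume "At = {}"
      hence "Ct = 0" by (simp add: Ct_def)
      thus False using Ctge dsVpos by simp
    qed
    have AtH: "At \<subseteq> H" by (auto simp: At_def)
    have AtV: "At \<subseteq> V" using AtH HV by blast
    have LAt: "L \<inter> At = {}" using AtH LH by blast
    have AtneV: "At \<noteq> V" using AtH HneV HV by blast
    have dsAt: "real (\<Sum>v\<in>At. degree_in At E v) \<le> d * card At" using minl AtV AtneV by simp
    have Thpos: "0 < Th t" using Dpos rpos by (simp add: Th_def)
    have ThS: "Th (Suc t) = r * Th t" by (simp add: Th_def)
    have rth: "D / 4 \<le> r * Th t"
    proof -
      have "1 \<le> r ^ t" using r2 by (intro one_le_power) auto
      hence "r * 1 \<le> r * r ^ t" using rpos by (intro mult_left_mono) auto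
      hence "r \<le> r ^ Suc t" by simp
      hence "2 \<le> r ^ Suc t" using r2 by linarith
      hence "D / 8 * 2 \<le> D / 8 * r ^ Suc t" using Dpos by (intro mult_left_mono) auto
      thus ?thesis by (simp add: Th_def algebra_simps)
    qed
    have cls: "\<forall>a\<in>At. Th t < real (degree_in L E a) \<and> real (degree_in L E a) \<le> r * Th t"
      using ThS by (auto simp: At_def x_def)
    obtain U where UV: "U \<subseteq> V" and Une: "U \<noteq> {}"
      and Ub: "min ((\<Sum>a\<in>At. real (degree_in L E a)) / (4 * n)) (D / (8 * r)) * card U
        \<le> real (\<Sum>v\<in>U. degree_in U E v)"
      and Udeg: "\<forall>v\<in>U. real (degree_in U E v) \<le> 2 * D"
    proof -
      have degL: "\<forall>v\<in>L. real (degree_in V E v) \<le> 2 * D" using degV_L[OF order_refl] by blast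
      have Dd: "D = d * s" by (simp add: D_def)
      have sr: "s = r * r" using rr by simp
      have D8: "8 \<le> D" using D64 by simp
      show ?thesis using bip_core[OF fV c2 LV AtV LAt Ane dsAt degL cls Dd sr r2 D8 Thpos rth cardL npos dpos] that
        by blast
    qed
    have CtA: "(\<Sum>a\<in>At. real (degree_in L E a)) = Ct" by (simp add: Ct_def x_def)
    have c1: "d * ln d / (80 * ln n) \<le> D / (8 * r)"
    proof -
      have "D / (8 * r) = d * r / 8" using rpos rr by (simp add: D_def field_simps)
      moreover have "d * 2 \<le> d * r" using r2 dpos by (intro mult_left_mono) auto
      ultimately show ?thesis using coef_le dpos by linarith
    qed
    have c2': "d * ln d / (80 * ln n) \<le> Ct / (4 * n)"
    proof -
      have q4: "q = 4 * (ln n / ln d)" using lnr lnd by (simp add: q_def field_simps)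
      have "1 \<le> ln n / ln d" using lndn lnd by simp
      hence T5: "real T \<le> 5 * (ln n / ln d)" using Tq(2) q4 by linarith
      have Tpos: "0 < real T" using T0 by simp
      have "d * n / 4 \<le> real T * Ct" using Ctge dsVge by linarith
      hence "d * n / (4 * real T) \<le> Ct" using Tpos by (simp add: field_simps)
      hence "d / (16 * real T) \<le> Ct / (4 * n)" using npos Tpos by (simp add: field_simps)
      moreover have "d * ln d / (80 * ln n) \<le> d / (16 * real T)"
      proof -
        have "16 * real T \<le> 80 * (ln n / ln d)" using T5 by linarith
        hence "d / (80 * (ln n / ln d)) \<le> d / (16 * real T)"
          using Tpos dpos lnn lnd by (intro divide_left_mono) auto
        moreover have "d / (80 * (ln n / ln d)) = d * ln d / (80 * ln n)" using lnd lnn by (simp add: field_simps)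
        ultimately show ?thesis by simp
      qed
      ultimately show ?thesis by linarith
    qed
    have "d * ln d / (80 * ln n) * card U \<le> min (Ct / (4 * n)) (D / (8 * r)) * card U"
      using c1 c2' by (intro mult_right_mono) auto
    also have "\<dots> \<le> real (\<Sum>v\<in>U. degree_in U E v)" using Ub CtA by simp
    finally have fin: "d * ln d / (80 * ln n) * card U \<le> real (\<Sum>v\<in>U. degree_in U E v)" .
    show ?thesis
      using UV Une fin Udeg Dpow by (auto simp: n_def)
  qed
qed

lemma dsle_gen:
  assumes fX: "finite X" and c2: "\<forall>e\<in>E. card e = 2"
  shows "real (\<Sum>v\<in>X. degree_in X E v) \<le> real (card X) * (real (card X) - 1)"
proof (cases "X = {}")
  case True thus ?thesis by simp
next
  case False
  hence cX: "1 \<le> card X" using fX by (simp add: Suc_le_eq card_gt_0_iff)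
  have "(\<Sum>v\<in>X. degree_in X E v) \<le> (\<Sum>v\<in>X. card X - 1)"
    by (rule sum_mono) (rule deg_le_card[OF fX c2])
  hence "(\<Sum>v\<in>X. degree_in X E v) \<le> card X * (card X - 1)" by simp
  hence "real (\<Sum>v\<in>X. degree_in X E v) \<le> real (card X * (card X - 1))" by (rule of_nat_mono)
  thus ?thesis using cX by (simp add: of_nat_diff)
qed

lemma avg_eq:
  assumes "finite U" "\<forall>e\<in>E. card e = 2"
  shows "avg_degree U (induced_edges E U) = real (\<Sum>v\<in>U. degree_in U E v) / real (card U)"
  unfolding avg_degree_def handshake[OF assms] by simp

lemma maxdeg_le:
  assumes fU: "finite U" and deg: "\<forall>v\<in>U. real (degree_in U E v) \<le> B" and B0: "0 \<le> B"
  shows "real (max_degree U (induced_edges E U)) \<le> B"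
proof -
  let ?f = "\<lambda>v. degree_in U (induced_edges E U) v"
  have fin: "finite (insert 0 (?f ` U))" using fU by simp
  have "Max (insert 0 (?f ` U)) \<in> insert 0 (?f ` U)" using fin by (rule Max_in) simp
  then consider "Max (insert 0 (?f ` U)) = 0" | v where "v \<in> U" "Max (insert 0 (?f ` U)) = ?f v" by auto
  thus ?thesis
  proof cases
    case 1 thus ?thesis using B0 by (simp add: max_degree_def)
  next
    case 2
    have "?f v \<le> degree_in U E v" unfolding degree_in_def using fU
      by (intro card_mono) (auto simp: induced_edges_def)
    hence "real (?f v) \<le> B" using deg 2(1) by (meson of_nat_le_iff order_trans)
    thus ?thesis using 2(2) by (simp add: max_degree_def)
  qed
qed

theorem lemma7p2:
  "\<exists>c::real. c > 0 \<and>
     (\<forall>(V::nat set) E (n::nat) (d::real).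
        simple_graph V E \<longrightarrow> card V = n \<longrightarrow> n \<ge> 2 \<longrightarrow>
        d \<ge> (ln (real n)) ^ 4 \<longrightarrow> avg_degree V E = d \<longrightarrow>
        (\<exists>U. U \<subseteq> V \<and> U \<noteq> {} \<and>
           avg_degree U (induced_edges E U) \<ge> c * ln d / ln (real n) * d \<and>
           real (max_degree U (induced_edges E U)) \<le> 2 * d powr (3/2)))"
proof (intro exI[of _ "1/80"] conjI allI impI)
  show "(0::real) < 1/80" by simp
next
  fix V :: "nat set" and E n and d :: real
  assume sg: "simple_graph V E" and cV: "card V = n" and n2: "2 \<le> n"
    and dlog: "(ln (real n)) ^ 4 \<le> d" and avg: "avg_degree V E = d"
  have fV: "finite V" and c2: "\<forall>e\<in>E. card e = 2" and EV: "\<forall>e\<in>E. e \<subseteq> V"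
    using sg by (auto simp: simple_graph_def)
  have IEV: "induced_edges E V = E" using EV by (auto simp: induced_edges_def)
  have npos: "0 < real n" using n2 by simp
  have Vne: "V \<noteq> {}" using cV n2 by auto
  have dsV: "real (\<Sum>v\<in>V. degree_in V E v) = d * n"
    using avg_eq[OF fV c2] avg IEV cV npos by (simp add: field_simps)
  have lnn: "0 < ln (real n)" using n2 by simp
  have d0: "0 \<le> d"
  proof -
    have "0 \<le> (ln (real n))^4" using lnn by simp
    thus ?thesis using dlog by linarith
  qed
  show "\<exists>U. U \<subseteq> V \<and> U \<noteq> {} \<and>
           avg_degree U (induced_edges E U) \<ge> 1/80 * ln d / ln (real n) * d \<and>
           real (max_degree U (induced_edges E U)) \<le> 2 * d powr (3/2)"
  proof -
  have dsle: "d * n \<le> real n * (real n - 1)" using dsle_gen[OF fV c2] dsV cV by simp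
  have dn: "d \<le> real n - 1" using dsle npos by (simp add: mult.commute)
  consider "d \<le> 1" | "1 < d \<and> d \<le> 16" | "16 < d" by linarith
  thus ?thesis
  proof cases
    case 1
    obtain v where v: "v \<in> V" using Vne by blast
    have IE0: "induced_edges E {v} = {}"
    proof -
      have "e \<notin> E" if "e \<subseteq> {v}" for e
      proof
        assume "e \<in> E"
        hence "card e = 2" using c2 by blast
        moreover have "card e \<le> 1" using that card_mono[of "{v}" e] by simp
        ultimately show False by simp
      qed
      thus ?thesis by (auto simp: induced_edges_def)
    qed
    have "ln d \<le> 0"
    proof (cases "d = 0")
      case True thus ?thesis by simp
    next
      case False thus ?thesis using 1 d0 by simp
    qed
    hence "1/80 * ln d / ln (real n) * d \<le> 0"
      using d0 lnn by (simp add: divide_nonpos_pos mult_nonpos_nonneg)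
    moreover have "avg_degree {v} (induced_edges E {v}) = 0" by (simp add: IE0 avg_degree_def)
    moreover have "real (max_degree {v} (induced_edges E {v})) \<le> 2 * d powr (3/2)"
      by (simp add: IE0 max_degree_def degree_in_def)
    ultimately show ?thesis using v by (intro exI[of _ "{v}"]) auto
  next
    case 2
    have "0 < real (card E)" using avg_eq[OF fV c2] dsV 2 npos IEV handshake[OF fV c2]
      by (metis mult_pos_pos of_nat_0_less_iff zero_less_mult_pos2 less_trans zero_less_one
          of_nat_mult of_nat_numeral order_less_le_trans nat_0_less_mult_iff zero_less_numeral)
    hence "E \<noteq> {}" by auto
    then obtain e where e: "e \<in> E" by blast
    have eV: "e \<subseteq> V" using EV e by blast
    have ce: "card e = 2" using c2 e by blast
    have fe: "finite e" using ce by (metis card.infinite zero_neq_numeral)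
    have IEe: "induced_edges E e = {e}"
    proof -
      have "e' = e" if "e' \<in> E" "e' \<subseteq> e" for e'
        using card_subset_eq[OF fe that(2)] c2 that(1) ce by simp
      thus ?thesis using e by (auto simp: induced_edges_def)
    qed
    have avg1: "avg_degree e (induced_edges E e) = 1" by (simp add: IEe avg_degree_def ce)
    have "ln d / ln (real n) \<le> 1" using dn 2 lnn by simp
    hence "1/80 * ln d / ln (real n) * d \<le> 1/80 * 1 * 16"
      using 2 by (intro mult_mono) (auto simp: lnn)
    hence lb: "1/80 * ln d / ln (real n) * d \<le> avg_degree e (induced_edges E e)" using avg1 by linarith
    have "1 \<le> d powr (3/2)" using 2 by (intro ge_one_powr_ge_zero) auto
    moreover have "\<forall>v\<in>e. real (degree_in e E v) \<le> 1"
    proof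
      fix v assume "v \<in> e"
      hence "degree_in e E v \<le> card e - 1" by (rule deg_le_card[OF fe c2])
      thus "real (degree_in e E v) \<le> 1" using ce by simp
    qed
    ultimately have "real (max_degree e (induced_edges E e)) \<le> 2 * d powr (3/2)"
      using maxdeg_le[OF fe, of E "2 * d powr (3/2)"] by force
    moreover have "e \<noteq> {}" using ce by auto
    ultimately show ?thesis using eV lb by (intro exI[of _ e]) auto
  next
    case 3
    obtain W where WV: "W \<subseteq> V" and Wne: "W \<noteq> {}"
      and Wd: "d * card W \<le> real (\<Sum>v\<in>W. degree_in W E v)"
      and Wmin: "\<forall>Y\<subseteq>W. Y \<noteq> W \<longrightarrow> real (\<Sum>v\<in>Y. degree_in Y E v) \<le> d * card Y"
      using minimal_dense[OF fV Vne, of d E] dsV cV by auto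
    have fW: "finite W" using WV fV finite_subset by blast
    obtain U where UW: "U \<subseteq> W" and Une: "U \<noteq> {}"
      and Ub: "(d * ln d / (80 * ln (real (card W)))) * card U \<le> real (\<Sum>v\<in>U. degree_in U E v)"
      and Ud: "\<forall>v\<in>U. real (degree_in U E v) \<le> 2 * d powr (3/2)"
      using main_core[OF fW c2 Wne 3 Wd Wmin] by blast
    have fU: "finite U" using UW fW finite_subset by blast
    have cU: "0 < real (card U)" using Une fU by (simp add: card_gt_0_iff)
    have Wn: "real (card W) \<le> real n" using card_mono[OF fV WV] cV by simp
    have cWpos: "0 < real (card W)" using Wne fW by (simp add: card_gt_0_iff)
    have "d * card W \<le> real (card W) * (real (card W) - 1)" using Wd dsle_gen[OF fW c2] by linarith
    hence "d \<le> real (card W) - 1" using cWpos by (simp add: mult.commute)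
    hence W17: "17 < real (card W)" using 3 by simp
    have lnW: "0 < ln (real (card W))" using W17 by simp
    have lnWn: "ln (real (card W)) \<le> ln (real n)" using Wn W17 by simp
    have lnd: "0 < ln d" using 3 by simp
    have "1/80 * ln d / ln (real n) * d = d * ln d / (80 * ln (real n))" by simp
    also have "\<dots> \<le> d * ln d / (80 * ln (real (card W)))"
      using lnW lnWn lnd 3 by (intro divide_left_mono mult_pos_pos) auto
    also have "\<dots> \<le> real (\<Sum>v\<in>U. degree_in U E v) / real (card U)"
      using Ub cU by (simp add: field_simps)
    also have "\<dots> = avg_degree U (induced_edges E U)" using avg_eq[OF fU c2] by simp
    finally have lb: "1/80 * ln d / ln (real n) * d \<le> avg_degree U (induced_edges E U)" .
    have "real (max_degree U (induced_edges E U)) \<le> 2 * d powr (3/2)"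
      using maxdeg_le[OF fU Ud] by simp
    thus ?thesis using UW WV Une lb by (intro exI[of _ U]) auto
  qed
  qed
qed

end
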